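(* A point $(x,y)\in\mathbb R^2$ belongs to $\mathcal P_0$ if and only if both $x$ and $y$ belong to $\mathbb F_0$.
   Context: An origami pair is a pair $(\mathcal P,\mathcal L)$ where $\mathcal P\subset\mathbb R^2$ is a set of points and $\mathcal L$ is a collection of lines in $\mathbb R^2$ such that: (i) the intersection point of any two non-parallel lines of $\mathcal L$ lies in $\mathcal P$; (ii) for any two distinct points of $\mathcal P$, the line through them is in $\mathcal L$; (iii) for any two distinct points of $\mathcal P$, the perpendicular bisector of the segment joining them is in $\mathcal L$; (iv) if $L_1,L_2\in\mathcal L$, then every line equidistant from $L_1$ and $L_2$ is in $\mathcal L$ (the midline if they are parallel, the angle bisectors if they intersect); (v) if $L_1,L_2\in\mathcal L$, then the mirror reflection of $L_2$ across $L_1$ is in $\mathcal L$. A set $\mathcal P\subset\mathbb R^2$ is closed under origami constructions if there is a collection of lines $\mathcal L$ with $(\mathcal P,\mathcal L)$ an origami pair. The set of origami constructible points is $\mathcal P_0=\bigcap\{\mathcal P : (0,0),(0,1)\in\mathcal P \text{ and } \mathcal P \text{ is closed under origami constructions}\}$. The set of origami numbers is $\mathbb F_0=\{\alpha\in\mathbb R : \exists v_1,v_2\in\mathcal P_0,\ |\alpha|=\operatorname{dist}(v_1,v_2)\}$. *)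

theory Defs
  imports "HOL-Analysis.Analysis"
begin

type_synonym point = "real \<times> real"

definition is_line :: "point set \<Rightarrow> bool" where
  "is_line L \<longleftrightarrow> (\<exists>a b c. (a, b) \<noteq> (0, 0) \<and> L = {(x, y). a * x + b * y = c})"

definition line_through :: "point \<Rightarrow> point \<Rightarrow> point set" where
  "line_through p q = {r. \<exists>t::real. r = (fst p + t * (fst q - fst p), snd p + t * (snd q - snd p))}"

definition perp_bisector :: "point \<Rightarrow> point \<Rightarrow> point set" where
  "perp_bisector p q = {r. dist r p = dist r q}"

text \<open>A line L is equidistant from L1 and L2 if every point of L has the same distance
to L1 as to L2 (for distinct parallel lines: the midline; for intersecting lines: the two
angle bisectors).\<close>
definition equidistant_line :: "point set \<Rightarrow> point set \<Rightarrow> point set \<Rightarrow> bool" where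
  "equidistant_line L L1 L2 \<longleftrightarrow> is_line L \<and> (\<forall>r\<in>L. infdist r L1 = infdist r L2)"

definition reflect :: "point set \<Rightarrow> point \<Rightarrow> point" where
  "reflect L p = (SOME q. (p \<in> L \<and> q = p) \<or> (p \<notin> L \<and> q \<noteq> p \<and> perp_bisector p q = L))"

definition origami_pair :: "point set \<Rightarrow> point set set \<Rightarrow> bool" where
  "origami_pair P \<L> \<longleftrightarrow>
     (\<forall>L\<in>\<L>. is_line L) \<and>
     (\<forall>L1\<in>\<L>. \<forall>L2\<in>\<L>. \<forall>p. L1 \<inter> L2 = {p} \<longrightarrow> p \<in> P) \<and>
     (\<forall>p\<in>P. \<forall>q\<in>P. p \<noteq> q \<longrightarrow> line_through p q \<in> \<L>) \<and>
     (\<forall>p\<in>P. \<forall>q\<in>P. p \<noteq> q \<longrightarrow> perp_bisector p q \<in> \<L>) \<and>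
     (\<forall>L1\<in>\<L>. \<forall>L2\<in>\<L>. \<forall>L. L1 \<noteq> L2 \<longrightarrow> equidistant_line L L1 L2 \<longrightarrow> L \<in> \<L>) \<and>
     (\<forall>L1\<in>\<L>. \<forall>L2\<in>\<L>. reflect L1 ` L2 \<in> \<L>)"

definition origami_closed :: "point set \<Rightarrow> bool" where
  "origami_closed P \<longleftrightarrow> (\<exists>\<L>. origami_pair P \<L>)"

definition origami_points :: "point set" where
  "origami_points = \<Inter>{P. (0, 0) \<in> P \<and> (0, 1) \<in> P \<and> origami_closed P}"

definition origami_numbers :: "real set" where
  "origami_numbers = {\<alpha>. \<exists>v1\<in>origami_points. \<exists>v2\<in>origami_points. \<bar>\<alpha>\<bar> = dist v1 v2}"

end

theory Submission
  imports Defs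
begin

definition lin :: "real \<Rightarrow> real \<Rightarrow> real \<Rightarrow> point set" where
  "lin a b c = {(x, y). a * x + b * y = c}"

lemma mem_lin[simp]: "(x, y) \<in> lin a b c \<longleftrightarrow> a * x + b * y = c"
  by (simp add: lin_def)

lemma dist_pt: "dist (x1::real, y1::real) (x2, y2) = sqrt ((x1 - x2)^2 + (y1 - y2)^2)"
  by (simp add: dist_Pair_Pair dist_real_def)

lemma is_line_lin: "(a, b) \<noteq> (0, 0) \<Longrightarrow> is_line (lin a b c)"
  unfolding is_line_def lin_def by blast

lemma is_line_E: "is_line L \<Longrightarrow> \<exists>a b c. (a, b) \<noteq> (0, 0) \<and> L = lin a b c"
  unfolding is_line_def lin_def by blast

lemma line_through_lin:
  assumes "(p1, p2) \<noteq> (q1, q2)"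
  shows "line_through (p1, p2) (q1, q2) = lin (q2 - p2) (p1 - q1) ((q2 - p2) * p1 + (p1 - q1) * p2)"
proof (rule set_eqI, clarify)
  fix r1 r2
  show "((r1, r2) \<in> line_through (p1, p2) (q1, q2)) = ((r1, r2) \<in> lin (q2 - p2) (p1 - q1) ((q2 - p2) * p1 + (p1 - q1) * p2))"
  proof
    assume "(r1, r2) \<in> line_through (p1, p2) (q1, q2)"
    then obtain t where r: "r1 = p1 + t * (q1 - p1)" "r2 = p2 + t * (q2 - p2)"
      unfolding line_through_def by auto
    have "(q2 - p2) * r1 + (p1 - q1) * r2 = (q2 - p2) * p1 + (p1 - q1) * p2"
      unfolding r by algebra
    then show "(r1, r2) \<in> lin (q2 - p2) (p1 - q1) ((q2 - p2) * p1 + (p1 - q1) * p2)"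
      by simp
  next
    assume "(r1, r2) \<in> lin (q2 - p2) (p1 - q1) ((q2 - p2) * p1 + (p1 - q1) * p2)"
    then have e: "(q2 - p2) * (r1 - p1) = (q1 - p1) * (r2 - p2)" by (simp add: algebra_simps)
    show "(r1, r2) \<in> line_through (p1, p2) (q1, q2)"
    proof (cases "q1 = p1")
      case False
      define t where "t = (r1 - p1) / (q1 - p1)"
      have "r1 = p1 + t * (q1 - p1)" "r2 = p2 + t * (q2 - p2)"
        using False e unfolding t_def by (auto simp: field_simps)
      then show ?thesis unfolding line_through_def by auto
    next
      case True
      then have "q2 \<noteq> p2" using assms by auto
      define t where "t = (r2 - p2) / (q2 - p2)"
      have "(q2 - p2) * (r1 - p1) = 0" using True e by simp
      then have "r1 = p1" using \<open>q2 \<noteq> p2\<close> by simp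
      have "r1 = p1 + t * (q1 - p1)" "r2 = p2 + t * (q2 - p2)"
        using True \<open>q2 \<noteq> p2\<close> \<open>r1 = p1\<close> unfolding t_def by (auto simp: field_simps)
      then show ?thesis unfolding line_through_def by auto
    qed
  qed
qed

lemma perp_bisector_lin:
  "perp_bisector (p1, p2) (q1, q2) = lin (2 * (q1 - p1)) (2 * (q2 - p2)) (q1^2 + q2^2 - p1^2 - p2^2)"
  unfolding perp_bisector_def lin_def
  by (auto simp: dist_pt algebra_simps power2_eq_square)

lemma inter_pt:
  assumes "a * e - b * d \<noteq> 0" "a * x + b * y = c" "d * x + e * y = f"
  shows "lin a b c \<inter> lin d e f = {(x, y)}"
proof (rule set_eqI, clarify)
  fix u v
  show "((u, v) \<in> lin a b c \<inter> lin d e f) = ((u, v) \<in> {(x, y)})"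
  proof
    assume "(u, v) \<in> lin a b c \<inter> lin d e f"
    then have h: "a * (u - x) + b * (v - y) = 0" "d * (u - x) + e * (v - y) = 0"
      using assms by (auto simp: algebra_simps)
    have "(a * e - b * d) * (u - x) = e * (a * (u - x) + b * (v - y)) - b * (d * (u - x) + e * (v - y))"
      by (simp add: algebra_simps)
    then have "u = x" using h assms(1) by simp
    have "(a * e - b * d) * (v - y) = a * (d * (u - x) + e * (v - y)) - d * (a * (u - x) + b * (v - y))"
      by (simp add: algebra_simps)
    then have "v = y" using h assms(1) by simp
    then show "(u, v) \<in> {(x, y)}" using \<open>u = x\<close> by simp
  qed (use assms in auto)
qed

definition reflF :: "real \<Rightarrow> real \<Rightarrow> real \<Rightarrow> point \<Rightarrow> point" where
  "reflF a b c p = (fst p - 2 * a * ((a * fst p + b * snd p - c) / (a^2 + b^2)),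
                    snd p - 2 * b * ((a * fst p + b * snd p - c) / (a^2 + b^2)))"

lemma ab_pos: "(a::real, b) \<noteq> (0, 0) \<Longrightarrow> a^2 + b^2 \<noteq> 0"
  by (auto simp: sum_power2_eq_zero_iff)

lemma reflF_pt:
  assumes "a^2 + b^2 = n" "a * x + b * y - c = s"
  shows "reflF a b c (x, y) = (x - 2 * a * s / n, y - 2 * b * s / n)"
  using assms unfolding reflF_def by simp

lemma reflF_invol:
  assumes "(a, b) \<noteq> (0, 0)"
  shows "reflF a b c (reflF a b c p) = p"
proof -
  have n: "a^2 + b^2 \<noteq> 0" using ab_pos[OF assms] .
  obtain x y where p: "p = (x, y)" by (cases p)
  define s where "s = a * x + b * y - c"
  define n where "n = a^2 + b^2"
  have nn: "n \<noteq> 0" using n n_def by simp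
  have 1: "reflF a b c p = (x - 2 * a * s / n, y - 2 * b * s / n)"
    unfolding p by (rule reflF_pt) (auto simp: s_def n_def)
  have "a * (x - 2 * a * s / n) + b * (y - 2 * b * s / n) - c = s - 2 * s * (a^2 + b^2) / n"
    using nn by (simp add: s_def field_simps power2_eq_square)
  also have "\<dots> = - s" using n by (simp add: n_def field_simps)
  finally have "reflF a b c (x - 2 * a * s / n, y - 2 * b * s / n) = (x - 2 * a * s / n - 2 * a * (-s) / n, y - 2 * b * s / n - 2 * b * (-s) / n)"
    by (intro reflF_pt) (auto simp: n_def)
  then show ?thesis using 1 p by simp
qed

lemma reflF_dist:
  assumes "(a, b) \<noteq> (0, 0)"
  shows "dist (reflF a b c p) (reflF a b c q) = dist p q"
proof -
  have n: "a^2 + b^2 \<noteq> 0" using ab_pos[OF assms] .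
  obtain x y where p: "p = (x, y)" by (cases p)
  obtain u v where q: "q = (u, v)" by (cases q)
  define s where "s = a * x + b * y - c"
  define s' where "s' = a * u + b * v - c"
  define n where "n = a^2 + b^2"
  have nn: "n \<noteq> 0" using n n_def by simp
  have 1: "reflF a b c p = (x - 2 * a * s / n, y - 2 * b * s / n)"
    unfolding p by (rule reflF_pt) (auto simp: s_def n_def)
  have 2: "reflF a b c q = (u - 2 * a * s' / n, v - 2 * b * s' / n)"
    unfolding q by (rule reflF_pt) (auto simp: s'_def n_def)
  have "(x - 2 * a * s / n - (u - 2 * a * s' / n))^2 + (y - 2 * b * s / n - (v - 2 * b * s' / n))^2
     = (x - u)^2 + (y - v)^2"
  proof -
    have d: "s - s' = a * (x - u) + b * (y - v)" by (simp add: s_def s'_def algebra_simps)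
    define k where "k = 2 * (s - s') / n"
    have "(x - 2 * a * s / n - (u - 2 * a * s' / n)) = (x - u) - a * k"
      "(y - 2 * b * s / n - (v - 2 * b * s' / n)) = (y - v) - b * k"
      unfolding k_def using nn by (simp_all add: field_simps)
    note e = this
    have "(x - 2 * a * s / n - (u - 2 * a * s' / n))^2 + (y - 2 * b * s / n - (v - 2 * b * s' / n))^2
       = ((x - u) - a * k)^2 + ((y - v) - b * k)^2" by (simp only: e)
    also have "\<dots> = (x - u)^2 + (y - v)^2 - 2 * k * (a * (x - u) + b * (y - v)) + k^2 * (a^2 + b^2)"
      by (simp add: power2_eq_square algebra_simps)
    also have "\<dots> = (x - u)^2 + (y - v)^2" using nn unfolding d[symmetric] k_def n_def[symmetric]
      by (simp add: field_simps power2_eq_square)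
    finally show ?thesis .
  qed
  then show ?thesis unfolding 1 2 by (simp add: p q dist_pt)
qed

lemma lin_scale: assumes "k \<noteq> 0" shows "lin (k * a) (k * b) (k * c) = lin a b c"
proof -
  have "k * a * x + k * b * y = k * c \<longleftrightarrow> a * x + b * y = c" for x y
  proof -
    have "k * a * x + k * b * y = k * (a * x + b * y)" by (simp add: algebra_simps)
    then show ?thesis using assms by simp
  qed
  then show ?thesis unfolding lin_def by auto
qed

lemma lin_eqI: "k \<noteq> 0 \<Longrightarrow> a' = k * a \<Longrightarrow> b' = k * b \<Longrightarrow> c' = k * c \<Longrightarrow> lin a' b' c' = lin a b c"
  using lin_scale by simp

lemma reflF_uniq:
  assumes ab: "(a, b) \<noteq> (0, 0)"
    and h: "(p \<in> lin a b c \<and> q = p) \<or> (p \<notin> lin a b c \<and> q \<noteq> p \<and> perp_bisector p q = lin a b c)"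
  shows "q = reflF a b c p"
proof -
  have n0: "a^2 + b^2 \<noteq> 0" using ab_pos[OF ab] .
  obtain x y where p: "p = (x, y)" by (cases p)
  define s where "s = a * x + b * y - c"
  define n where "n = a^2 + b^2"
  have nn: "n \<noteq> 0" using n0 n_def by simp
  have R: "reflF a b c p = (x - 2 * a * s / n, y - 2 * b * s / n)"
    unfolding p by (rule reflF_pt) (auto simp: s_def n_def)
  show ?thesis
  proof (cases "p \<in> lin a b c")
  case True
  then have "s = 0" using p by (simp add: s_def)
  then show ?thesis using h True R p by simp
next
  case False
  obtain u v where q: "q = (u, v)" by (cases q)
  have pb: "perp_bisector (x, y) (u, v) = lin a b c" using h False p q by auto
  define m1 where "m1 = (x + u) / 2"
  define m2 where "m2 = (y + v) / 2"
  have "(m1, m2) \<in> perp_bisector (x, y) (u, v)"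
    unfolding perp_bisector_lin m1_def m2_def by (simp add: field_simps power2_eq_square)
  then have e1: "a * m1 + b * m2 = c" using pb by simp
  have "(m1 - b, m2 + a) \<in> lin a b c" using e1 by (simp add: algebra_simps)
  then have "(m1 - b, m2 + a) \<in> perp_bisector (x, y) (u, v)" using pb by simp
  then have e2: "a * (v - y) = b * (u - x)"
    unfolding perp_bisector_lin m1_def m2_def by (simp add: field_simps power2_eq_square)
  have e1': "a * (u - x) + b * (v - y) = - 2 * s"
    using e1 unfolding m1_def m2_def s_def by (simp add: field_simps)
  have "n * (u - x) = a * (a * (u - x) + b * (v - y)) + b * (b * (u - x) - a * (v - y))"
    unfolding n_def by (simp add: power2_eq_square algebra_simps)
  then have "n * (u - x) = a * (- 2 * s)" using e1' e2 by simp
  then have U: "u = x - 2 * a * s / n" using nn by (simp add: field_simps)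
  have "n * (v - y) = b * (a * (u - x) + b * (v - y)) + a * (a * (v - y) - b * (u - x))"
    unfolding n_def by (simp add: power2_eq_square algebra_simps)
  then have "n * (v - y) = b * (- 2 * s)" using e1' e2 by simp
  then have V: "v = y - 2 * b * s / n" using nn by (simp add: field_simps)
  show ?thesis using U V R q by simp
qed
qed

lemma reflect_lin:
  assumes ab: "(a, b) \<noteq> (0, 0)"
  shows "reflect (lin a b c) p = reflF a b c p"
proof -
  have n0: "a^2 + b^2 \<noteq> 0" using ab_pos[OF ab] .
  obtain x y where p: "p = (x, y)" by (cases p)
  define s where "s = a * x + b * y - c"
  define n where "n = a^2 + b^2"
  have nn: "n \<noteq> 0" using n0 n_def by simp
  have R: "reflF a b c p = (x - 2 * a * s / n, y - 2 * b * s / n)"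
    unfolding p by (rule reflF_pt) (auto simp: s_def n_def)
  have rprop: "(p \<in> lin a b c \<and> reflF a b c p = p) \<or>
     (p \<notin> lin a b c \<and> reflF a b c p \<noteq> p \<and> perp_bisector p (reflF a b c p) = lin a b c)"
  proof (cases "s = 0")
    case True
    then show ?thesis using R p by (simp add: s_def)
  next
    case False
    have "p \<notin> lin a b c" using False p by (simp add: s_def)
    moreover have "reflF a b c p \<noteq> p"
    proof
      assume "reflF a b c p = p"
      then have "2 * a * s / n = 0" "2 * b * s / n = 0" using R p by auto
      then show False using False nn ab by simp
    qed
    moreover have "perp_bisector p (reflF a b c p) = lin a b c"
    proof -
      have "perp_bisector p (reflF a b c p) = lin (2 * (x - 2 * a * s / n - x)) (2 * (y - 2 * b * s / n - y))
        ((x - 2 * a * s / n)^2 + (y - 2 * b * s / n)^2 - x^2 - y^2)"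
        by (subst R, unfold p, rule perp_bisector_lin)
      also have "\<dots> = lin a b c"
      proof (rule lin_eqI[where k = "-4 * s / n"])
        show "-4 * s / n \<noteq> 0" using False nn by simp
        show "2 * (x - 2 * a * s / n - x) = -4 * s / n * a" by (simp add: field_simps)
        show "2 * (y - 2 * b * s / n - y) = -4 * s / n * b" by (simp add: field_simps)
        define k where "k = 2 * s / n"
        have kk: "2 * a * s / n = a * k" "2 * b * s / n = b * k" unfolding k_def by simp_all
        have "(x - 2 * a * s / n)^2 + (y - 2 * b * s / n)^2 - x^2 - y^2
          = (x - a * k)^2 + (y - b * k)^2 - x^2 - y^2" by (simp only: kk)
        also have "\<dots> = -2 * k * (a * x + b * y) + k^2 * (a^2 + b^2)"
          by (simp add: power2_eq_square algebra_simps)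
        also have "\<dots> = -2 * k * (a * x + b * y) + k^2 * n" by (simp add: n_def)
        also have "\<dots> = -2 * k * (s + c) + k^2 * n" by (simp add: s_def)
        also have "\<dots> = -4 * s / n * c" unfolding k_def using nn
          by (simp add: field_simps power2_eq_square)
        finally show "(x - 2 * a * s / n)^2 + (y - 2 * b * s / n)^2 - x^2 - y^2 = -4 * s / n * c" .
      qed
      finally show ?thesis .
    qed
    ultimately show ?thesis by blast
  qed
  have uniq: "q = reflF a b c p" if h: "(p \<in> lin a b c \<and> q = p) \<or>
     (p \<notin> lin a b c \<and> q \<noteq> p \<and> perp_bisector p q = lin a b c)" for q
    using reflF_uniq[OF ab h] .
  show ?thesis unfolding reflect_def
  proof (rule some_equality)
    show "(p \<in> lin a b c \<and> reflF a b c p = p) \<or>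
     (p \<notin> lin a b c \<and> reflF a b c p \<noteq> p \<and> perp_bisector p (reflF a b c p) = lin a b c)" by (rule rprop)
  next
    fix q assume "(p \<in> lin a b c \<and> q = p) \<or>
     (p \<notin> lin a b c \<and> q \<noteq> p \<and> perp_bisector p q = lin a b c)"
    then show "q = reflF a b c p" by (rule uniq)
  qed
qed

lemma reflect_pb:
  assumes "p \<noteq> q" shows "reflect (perp_bisector p q) p = q"
proof -
  obtain x y u v where p: "p = (x, y)" and q: "q = (u, v)" by (cases p, cases q)
  define M where "M = perp_bisector p q"
  have M: "M = lin (2 * (u - x)) (2 * (v - y)) (u^2 + v^2 - x^2 - y^2)"
    unfolding M_def p q by (rule perp_bisector_lin)
  have ab: "(2 * (u - x), 2 * (v - y)) \<noteq> (0, 0)" using assms p q by auto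
  have pn: "p \<notin> M" unfolding M_def perp_bisector_def using assms by simp
  have "q = reflF (2 * (u - x)) (2 * (v - y)) (u^2 + v^2 - x^2 - y^2) p"
  proof (rule reflF_uniq[OF ab])
    have "perp_bisector p q = lin (2 * (u - x)) (2 * (v - y)) (u^2 + v^2 - x^2 - y^2)"
      using M unfolding M_def .
    moreover have "p \<notin> lin (2 * (u - x)) (2 * (v - y)) (u^2 + v^2 - x^2 - y^2)" using pn M by simp
    ultimately show "p \<in> lin (2 * (u - x)) (2 * (v - y)) (u\<^sup>2 + v\<^sup>2 - x\<^sup>2 - y\<^sup>2) \<and> q = p \<or>
    p \<notin> lin (2 * (u - x)) (2 * (v - y)) (u\<^sup>2 + v\<^sup>2 - x\<^sup>2 - y\<^sup>2) \<and>
    q \<noteq> p \<and> perp_bisector p q = lin (2 * (u - x)) (2 * (v - y)) (u\<^sup>2 + v\<^sup>2 - x\<^sup>2 - y\<^sup>2)"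
      using assms by blast
  qed
  moreover have "reflect M p = reflF (2 * (u - x)) (2 * (v - y)) (u^2 + v^2 - x^2 - y^2) p"
    unfolding M by (rule reflect_lin[OF ab])
  ultimately show ?thesis unfolding M_def by simp
qed

lemma cs2: "\<bar>a * u + b * v\<bar> \<le> sqrt (a^2 + b^2) * sqrt (u^2 + v^2)"
proof -
  have "\<bar>a * u + b * v\<bar> = sqrt ((a * u + b * v)^2)" by simp
  also have "\<dots> \<le> sqrt ((a * u + b * v)^2 + (a * v - b * u)^2)" by (rule real_sqrt_le_mono) simp
  also have "(a * u + b * v)^2 + (a * v - b * u)^2 = (a^2 + b^2) * (u^2 + v^2)"
    by (simp add: power2_eq_square algebra_simps)
  also have "sqrt ((a^2 + b^2) * (u^2 + v^2)) = sqrt (a^2 + b^2) * sqrt (u^2 + v^2)"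
    by (rule real_sqrt_mult)
  finally show ?thesis .
qed

lemma infdist_lin:
  assumes ab: "(a, b) \<noteq> (0, 0)"
  shows "infdist (r1, r2) (lin a b c) = \<bar>a * r1 + b * r2 - c\<bar> / sqrt (a^2 + b^2)"
proof -
  define n where "n = a^2 + b^2"
  define s where "s = a * r1 + b * r2 - c"
  have n0: "n \<noteq> 0" using ab_pos[OF ab] n_def by simp
  have npos: "n > 0" using n0 unfolding n_def by (simp add: add_pos_nonneg order_le_neq_trans sum_power2_ge_zero)
  define f where "f = (r1 - a * s / n, r2 - b * s / n)"
  have fin: "f \<in> lin a b c"
  proof -
    have "a * (r1 - a * s / n) + b * (r2 - b * s / n) = a * r1 + b * r2 - s * ((a^2 + b^2) / n)"
      by (simp add: field_simps power2_eq_square add_divide_distrib)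
    also have "\<dots> = c" using n0 unfolding n_def[symmetric] by (simp add: s_def)
    finally show ?thesis unfolding f_def by simp
  qed
  have df: "dist (r1, r2) f = \<bar>s\<bar> / sqrt n"
  proof -
    have "(r1 - (r1 - a * s / n))^2 + (r2 - (r2 - b * s / n))^2 = s^2 * (a^2 + b^2) / n^2"
      by (simp add: field_simps power2_eq_square add_divide_distrib)
    also have "\<dots> = s^2 / n" using n0 unfolding n_def[symmetric] by (simp add: power2_eq_square)
    finally have "(r1 - (r1 - a * s / n))^2 + (r2 - (r2 - b * s / n))^2 = s^2 / n" .
    then have "dist (r1, r2) f = sqrt (s^2 / n)" unfolding f_def dist_pt by simp
    also have "\<dots> = \<bar>s\<bar> / sqrt n" by (simp add: real_sqrt_divide)
    finally show ?thesis .
  qed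
  have "infdist (r1, r2) (lin a b c) = \<bar>s\<bar> / sqrt n"
  proof (rule antisym)
    show "infdist (r1, r2) (lin a b c) \<le> \<bar>s\<bar> / sqrt n" using infdist_le[OF fin, of "(r1, r2)"] df by simp
    have "\<bar>s\<bar> / sqrt n \<le> dist (r1, r2) z" if z: "z \<in> lin a b c" for z
    proof -
      obtain z1 z2 where zz: "z = (z1, z2)" by (cases z)
      have "s = a * (r1 - z1) + b * (r2 - z2)" using z zz by (simp add: s_def algebra_simps)
      then have "\<bar>s\<bar> \<le> sqrt n * dist (r1, r2) z"
        using cs2[of a "r1 - z1" b "r2 - z2"] zz by (simp add: n_def dist_pt)
      then show ?thesis using npos by (simp add: divide_le_eq mult.commute)
    qed
    then show "\<bar>s\<bar> / sqrt n \<le> infdist (r1, r2) (lin a b c)"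
      using fin by (subst infdist_notempty) (auto intro!: cINF_greatest)
  qed
  then show ?thesis by (simp add: s_def n_def)
qed

context
  fixes P :: "point set" and LL :: "point set set"
  assumes op: "origami_pair P LL" and O: "(0, 0) \<in> P" and E: "(0, 1) \<in> P"
begin

lemmas opu = op[unfolded origami_pair_def]

lemma ax_line: "M \<in> LL \<Longrightarrow> is_line M"
  using conjunct1[OF opu] by blast
lemma ax_int: "L1 \<in> LL \<Longrightarrow> L2 \<in> LL \<Longrightarrow> L1 \<inter> L2 = {p} \<Longrightarrow> p \<in> P"
  using conjunct1[OF conjunct2[OF opu]] by blast
lemma ax_lt: "p \<in> P \<Longrightarrow> q \<in> P \<Longrightarrow> p \<noteq> q \<Longrightarrow> line_through p q \<in> LL"
  using conjunct1[OF conjunct2[OF conjunct2[OF opu]]] by blast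
lemma ax_pb: "p \<in> P \<Longrightarrow> q \<in> P \<Longrightarrow> p \<noteq> q \<Longrightarrow> perp_bisector p q \<in> LL"
  using conjunct1[OF conjunct2[OF conjunct2[OF conjunct2[OF opu]]]] by blast
lemma ax_eq: "L1 \<in> LL \<Longrightarrow> L2 \<in> LL \<Longrightarrow> L1 \<noteq> L2 \<Longrightarrow> equidistant_line M L1 L2 \<Longrightarrow> M \<in> LL"
  using conjunct1[OF conjunct2[OF conjunct2[OF conjunct2[OF conjunct2[OF opu]]]]] by blast
lemma ax_refl: "L1 \<in> LL \<Longrightarrow> L2 \<in> LL \<Longrightarrow> reflect L1 ` L2 \<in> LL"
  using conjunct2[OF conjunct2[OF conjunct2[OF conjunct2[OF conjunct2[OF opu]]]]] by blast

lemma refl_line: assumes "M \<in> LL"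
  obtains a b c where "(a, b) \<noteq> (0, 0)" "M = lin a b c" "\<And>p. reflect M p = reflF a b c p"
proof -
  obtain a b c where ab: "(a, b) \<noteq> (0, 0)" and Me: "M = lin a b c" using is_line_E[OF ax_line[OF assms]] by blast
  show ?thesis by (rule that[OF ab Me]) (simp only: Me reflect_lin[OF ab])
qed

lemma refl_inj: assumes "M \<in> LL" shows "inj (reflect M)"
proof -
  obtain a b c where ab: "(a, b) \<noteq> (0, 0)" and "M = lin a b c" and r: "\<And>p. reflect M p = reflF a b c p"
    using refl_line[OF assms] by metis
  show ?thesis
  proof (rule injI)
    fix p q assume "reflect M p = reflect M q"
    then have "reflF a b c (reflF a b c p) = reflF a b c (reflF a b c q)" using r by simp
    then show "p = q" using reflF_invol[OF ab] by simp
  qed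
qed

lemma refl_dist: assumes "M \<in> LL" shows "dist (reflect M p) (reflect M q) = dist p q"
proof -
  obtain a b c where ab: "(a, b) \<noteq> (0, 0)" and "M = lin a b c" and r: "\<And>p. reflect M p = reflF a b c p"
    using refl_line[OF assms] by metis
  show ?thesis using reflF_dist[OF ab] r by simp
qed

lemma pt_refl:
  assumes M: "M \<in> LL" and p: "(x, y) \<in> P" and a: "(a1, a2) \<in> P" and b: "(b1, b2) \<in> P"
    and det: "(a1 - x) * (b2 - y) - (a2 - y) * (b1 - x) \<noteq> 0"
  shows "reflect M (x, y) \<in> P"
proof -
  have pa: "(x, y) \<noteq> (a1, a2)" using det by auto
  have pb: "(x, y) \<noteq> (b1, b2)" using det by auto
  define A where "A = line_through (x, y) (a1, a2)"
  define B where "B = line_through (x, y) (b1, b2)"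
  have AL: "A \<in> LL" unfolding A_def using ax_lt[OF p a pa] .
  have BL: "B \<in> LL" unfolding B_def using ax_lt[OF p b pb] .
  have "A \<inter> B = {(x, y)}"
    unfolding A_def B_def line_through_lin[OF pa] line_through_lin[OF pb]
    by (rule inter_pt) (use det in \<open>auto simp: algebra_simps\<close>)
  then have "reflect M ` A \<inter> reflect M ` B = {reflect M (x, y)}"
    using image_Int[OF refl_inj[OF M], of A B] by simp
  then show ?thesis using ax_int[OF ax_refl[OF M AL] ax_refl[OF M BL]] by blast
qed

lemma Y_eq: "line_through (0, 0) (0, 1) = lin 1 0 0"
  by (subst line_through_lin) simp_all
lemma Y_in: "lin 1 0 0 \<in> LL"
  using ax_lt[OF O E] Y_eq by simp
lemma H_in: "lin 0 2 1 \<in> LL"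
  using ax_pb[OF O E] perp_bisector_lin[of 0 0 0 1] by simp
lemma C_in: "(0, 1/2) \<in> P"
  by (rule ax_int[OF Y_in H_in], rule inter_pt) simp_all

lemma G_in: "lin 1 1 (1/2) \<in> LL"
proof (rule ax_eq[OF Y_in H_in])
  show "lin 1 0 0 \<noteq> lin 0 2 1"
  proof
    assume "lin 1 0 0 = lin 0 2 1"
    moreover have "(0, 0) \<in> lin 1 0 0" by simp
    ultimately show False by simp
  qed
  show "equidistant_line (lin 1 1 (1/2)) (lin 1 0 0) (lin 0 2 1)"
    unfolding equidistant_line_def
  proof (intro conjI ballI)
    show "is_line (lin 1 1 (1/2))" by (rule is_line_lin) simp
    fix r assume r: "r \<in> lin 1 1 (1/2)"
    obtain r1 r2 where rr: "r = (r1, r2)" by (cases r)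
    have "r1 + r2 = 1/2" using r rr by simp
    then show "infdist r (lin 1 0 0) = infdist r (lin 0 2 1)"
      unfolding rr by (simp add: infdist_lin abs_if)
  qed
qed

lemma K_in: "lin 0 1 (1/4) \<in> LL"
proof -
  have "(0::real, 0::real) \<noteq> (0, 1/2)" by simp
  from ax_pb[OF O C_in this] have "perp_bisector (0, 0) (0, 1/2) \<in> LL" .
  moreover have "perp_bisector (0, 0) (0, 1/2) = lin 0 1 (1/4)"
    by (subst perp_bisector_lin) (rule lin_eqI[where k = 1], simp_all add: power2_eq_square)
  ultimately show ?thesis by simp
qed

lemma Q_in: "(1/4, 1/4) \<in> P"
  by (rule ax_int[OF G_in K_in], rule inter_pt) simp_all

lemma refl_any: assumes M: "M \<in> LL" and p: "p \<in> P" shows "reflect M p \<in> P"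
proof -
  obtain x y where pp: "p = (x, y)" by (cases p)
  have pP: "(x, y) \<in> P" using p pp by simp
  show ?thesis unfolding pp
  proof (cases "x = 0")
    case False
    show "reflect M (x, y) \<in> P" by (rule pt_refl[OF M pP O E]) (use False in \<open>simp add: algebra_simps\<close>)
  next
    case True
    show "reflect M (x, y) \<in> P"
    proof (cases "y = 0")
      case False
      show ?thesis by (rule pt_refl[OF M pP O Q_in]) (use False True in simp)
    next
      case True2: True
      show ?thesis by (rule pt_refl[OF M pP E Q_in]) (use True True2 in simp)
    qed
  qed
qed

lemma D_eq: "line_through (0, 0) (1/4, 1/4) = lin (1/4) (-1/4) 0"
  by (subst line_through_lin) simp_all
lemma D_in: "lin (1/4) (-1/4) 0 \<in> LL"
  using ax_lt[OF O Q_in] D_eq by simp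
lemma D_refl: "reflect (lin (1/4) (-1/4) 0) (x, y) = (y, x)"
proof -
  have "reflect (lin (1/4) (-1/4) 0) (x, y) = reflF (1/4) (-1/4) 0 (x, y)"
    by (rule reflect_lin) simp
  also have "\<dots> = (y, x)" unfolding reflF_def by (simp add: field_simps power2_eq_square)
  finally show ?thesis .
qed
lemma swap_in: "(x, y) \<in> P \<Longrightarrow> (y, x) \<in> P"
  using refl_any[OF D_in, of "(x, y)"] D_refl by simp
lemma F_in: "(1, 0) \<in> P"
  using swap_in[OF E] .
lemma X_eq: "line_through (0, 0) (1, 0) = lin 0 (-1) 0"
  by (subst line_through_lin) simp_all
lemma X_in: "lin 0 (-1) 0 \<in> LL"
  using ax_lt[OF O F_in] X_eq by simp
lemma X_refl: "reflect (lin 0 (-1) 0) (x, y) = (x, -y)"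
proof -
  have "reflect (lin 0 (-1) 0) (x, y) = reflF 0 (-1) 0 (x, y)"
    by (rule reflect_lin) simp
  also have "\<dots> = (x, -y)" unfolding reflF_def by simp
  finally show ?thesis .
qed
lemma Y_refl: "reflect (lin 1 0 0) (x, y) = (-x, y)"
proof -
  have "reflect (lin 1 0 0) (x, y) = reflF 1 0 0 (x, y)"
    by (rule reflect_lin) simp
  also have "\<dots> = (-x, y)" unfolding reflF_def by simp
  finally show ?thesis .
qed

lemma proj_in: assumes p: "(x, y) \<in> P" shows "(x, 0) \<in> P"
proof (cases "y = 0")
  case True then show ?thesis using p by simp
next
  case False
  have p': "(x, -y) \<in> P" using refl_any[OF X_in p] X_refl by simp
  have ne: "(x, y) \<noteq> (x, -y)" using False by simp
  have V: "line_through (x, y) (x, -y) \<in> LL" using ax_lt[OF p p' ne] .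
  have "line_through (x, y) (x, -y) \<inter> lin 0 (-1) 0 = {(x, 0)}"
    unfolding line_through_lin[OF ne] by (rule inter_pt) (use False in \<open>simp_all add: algebra_simps\<close>)
  then show ?thesis using ax_int[OF V X_in] by blast
qed

lemma negx_in: assumes "(x, 0) \<in> P" shows "(-x, 0) \<in> P"
  using refl_any[OF Y_in assms] Y_refl by simp

lemma rot_in:
  assumes w: "(w1, w2) \<in> P"
  shows "(sqrt (w1^2 + w2^2), 0) \<in> P"
proof -
  define d where "d = sqrt (w1^2 + w2^2)"
  show ?thesis unfolding d_def[symmetric]
  proof (cases "w2 = 0")
    case True
    then have d: "d = \<bar>w1\<bar>" unfolding d_def by simp
    show "(d, 0) \<in> P"
    proof (cases "w1 \<ge> 0")
      case True
      then show ?thesis using w d \<open>w2 = 0\<close> by simp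
    next
      case False
      then show ?thesis using negx_in[of w1] w d \<open>w2 = 0\<close> by simp
    qed
  next
    case False
    have dd: "d^2 = w1^2 + w2^2" unfolding d_def by simp
    have dpos: "d > 0" unfolding d_def using False by (simp add: add_nonneg_pos)
    have "w1^2 < d^2" using dd False by simp
    then have "\<bar>w1\<bar> < d" using power2_less_imp_less[of "\<bar>w1\<bar>" d] dpos by simp
    then have dw: "d + w1 > 0" by linarith
    have ne: "(0, 0) \<noteq> (w1, w2)" using False by simp
    have W: "lin w2 (-w1) 0 \<in> LL"
      using ax_lt[OF O w ne] line_through_lin[OF ne] by simp
    have B: "lin w2 (-(d + w1)) 0 \<in> LL"
    proof (rule ax_eq[OF X_in W])
      show "lin 0 (-1) 0 \<noteq> lin w2 (-w1) 0"
      proof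
        assume "lin 0 (-1) 0 = lin w2 (-w1) 0"
        moreover have "(1, 0) \<in> lin 0 (-1) 0" by simp
        ultimately show False using False by simp
      qed
      show "equidistant_line (lin w2 (-(d + w1)) 0) (lin 0 (-1) 0) (lin w2 (-w1) 0)"
        unfolding equidistant_line_def
      proof (intro conjI ballI)
        show "is_line (lin w2 (-(d + w1)) 0)" by (rule is_line_lin) (use False in simp)
        fix r assume r: "r \<in> lin w2 (-(d + w1)) 0"
        obtain r1 r2 where rr: "r = (r1, r2)" by (cases r)
        have e: "w2 * r1 = (d + w1) * r2" using r rr by (simp add: algebra_simps)
        have "infdist r (lin w2 (-w1) 0) = \<bar>w2 * r1 + - w1 * r2 - 0\<bar> / sqrt (w2^2 + (-w1)^2)"
          unfolding rr by (rule infdist_lin) (use False in simp)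
        also have "\<dots> = \<bar>d * r2\<bar> / d"
        proof -
          have 1: "w2 * r1 + - w1 * r2 - 0 = d * r2" using e by (simp add: algebra_simps)
          have 2: "sqrt (w2^2 + (-w1)^2) = d" unfolding d_def by (simp add: add.commute)
          show ?thesis by (simp only: 1 2)
        qed
        also have "\<dots> = \<bar>r2\<bar>" using dpos by (simp add: abs_mult)
        finally have 1: "infdist r (lin w2 (-w1) 0) = \<bar>r2\<bar>" .
        have "infdist r (lin 0 (-1) 0) = \<bar>0 * r1 + - 1 * r2 - 0\<bar> / sqrt (0^2 + (-1)^2)"
          unfolding rr by (rule infdist_lin) simp
        then have 2: "infdist r (lin 0 (-1) 0) = \<bar>r2\<bar>" by simp
        show "infdist r (lin 0 (-1) 0) = infdist r (lin w2 (-w1) 0)" using 1 2 by simp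
      qed
    qed
    have ab: "(w2, -(d + w1)) \<noteq> (0, 0)" using False by simp
    have n: "w2^2 + (-(d + w1))^2 = 2 * d * (d + w1)"
      using dd by (simp add: power2_eq_square algebra_simps)
    have s: "w2 * w1 + (-(d + w1)) * w2 - 0 = - d * w2" by (simp add: algebra_simps)
    have "reflect (lin w2 (-(d + w1)) 0) (w1, w2) = reflF w2 (-(d + w1)) 0 (w1, w2)"
      by (rule reflect_lin[OF ab])
    also have "\<dots> = (w1 - 2 * w2 * (- d * w2) / (2 * d * (d + w1)),
                      w2 - 2 * (-(d + w1)) * (- d * w2) / (2 * d * (d + w1)))"
      by (rule reflF_pt[OF n s])
    also have "\<dots> = (d, 0)"
    proof -
      have nz: "2 * d * (d + w1) \<noteq> 0" using dpos dw by simp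
      have c: "(2 * d) * w2^2 / ((2 * d) * (d + w1)) = w2^2 / (d + w1)"
        by (rule nonzero_mult_divide_mult_cancel_left) (use dpos in simp)
      have "2 * w2 * (- d * w2) / (2 * d * (d + w1)) = - ((2 * d) * w2^2 / ((2 * d) * (d + w1)))"
        by (simp add: algebra_simps power2_eq_square)
      then have "2 * w2 * (- d * w2) / (2 * d * (d + w1)) = - (w2^2 / (d + w1))"
        using c by simp
      then have "w1 - 2 * w2 * (- d * w2) / (2 * d * (d + w1)) = w1 + w2^2 / (d + w1)" by simp
      also have "w2^2 = (d + w1) * (d - w1)" using dd by (simp add: power2_eq_square algebra_simps)
      also have "w1 + (d + w1) * (d - w1) / (d + w1) = d" using dw by simp
      finally have 1: "w1 - 2 * w2 * (- d * w2) / (2 * d * (d + w1)) = d" .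
      have "2 * (-(d + w1)) * (- d * w2) = w2 * (2 * d * (d + w1))" by (simp add: algebra_simps)
      then have "2 * (-(d + w1)) * (- d * w2) / (2 * d * (d + w1)) = w2" using nz by simp
      then have 2: "w2 - 2 * (-(d + w1)) * (- d * w2) / (2 * d * (d + w1)) = 0" by simp
      show ?thesis using 1 2 by simp
    qed
    finally have "reflect (lin w2 (-(d + w1)) 0) (w1, w2) = (d, 0)" .
    then show "(d, 0) \<in> P" using refl_any[OF B w] by simp
  qed
qed

lemma dist_in:
  assumes v1: "v1 \<in> P" and v2: "v2 \<in> P"
  shows "(dist v1 v2, 0) \<in> P"
proof -
  have "\<exists>w \<in> P. dist (0, 0) w = dist v1 v2"
  proof (cases "v1 = (0, 0)")
    case True then show ?thesis using v2 by blast
  next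
    case False
    define M where "M = perp_bisector v1 (0, 0)"
    have M: "M \<in> LL" unfolding M_def by (rule ax_pb[OF v1 O False])
    have "reflect M v1 = (0, 0)" unfolding M_def by (rule reflect_pb[OF False])
    then have "dist (0, 0) (reflect M v2) = dist v1 v2" using refl_dist[OF M, of v1 v2] by simp
    then show ?thesis using refl_any[OF M v2] by blast
  qed
  then obtain w1 w2 where w: "(w1, w2) \<in> P" "dist (0, 0) (w1, w2) = dist v1 v2" by auto
  have "dist (0, 0) (w1, w2) = sqrt (w1^2 + w2^2)" by (simp add: dist_pt)
  then show ?thesis using rot_in[OF w(1)] w(2) by simp
qed

lemma coord_in:
  assumes v1: "v1 \<in> P" and v2: "v2 \<in> P" and x: "\<bar>x\<bar> = dist v1 v2"
  shows "(x, 0) \<in> P"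
proof -
  have a: "(\<bar>x\<bar>, 0) \<in> P" using dist_in[OF v1 v2] x by simp
  show ?thesis
  proof (cases "x \<ge> 0")
    case True then show ?thesis using a by simp
  next
    case False then show ?thesis using negx_in[OF a] by simp
  qed
qed

lemma pair_in:
  assumes x: "(x, 0) \<in> P" and y: "(y, 0) \<in> P"
  shows "(x, y) \<in> P"
proof -
  have y': "(0, y) \<in> P" using swap_in[OF y] .
  show ?thesis
  proof (cases "x = 0")
    case True then show ?thesis using y' by simp
  next
    case False
    have ne: "(0, 0) \<noteq> (x, 0)" using False by simp
    have M: "lin (2 * x) 0 (x^2) \<in> LL"
      using ax_pb[OF O x ne] perp_bisector_lin[of 0 0 x 0] by simp
    have "reflect (lin (2 * x) 0 (x^2)) (0, y) = reflF (2 * x) 0 (x^2) (0, y)"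
      by (rule reflect_lin) (use False in simp)
    also have "\<dots> = (x, y)" unfolding reflF_def using False by (simp add: field_simps power2_eq_square)
    finally show ?thesis using refl_any[OF M y'] by simp
  qed
qed

end

lemma mem_points: "p \<in> origami_points \<longleftrightarrow> (\<forall>P. (0, 0) \<in> P \<and> (0, 1) \<in> P \<and> origami_closed P \<longrightarrow> p \<in> P)"
  unfolding origami_points_def by blast

theorem mainTheorem2:
  fixes x y :: real
  shows "(x, y) \<in> origami_points \<longleftrightarrow> x \<in> origami_numbers \<and> y \<in> origami_numbers"
proof
  assume h: "(x, y) \<in> origami_points"
  have O0: "(0, 0) \<in> origami_points" unfolding mem_points by blast
  have x0: "(x, 0) \<in> origami_points" unfolding mem_points
  proof (intro allI impI, elim conjE)
    fix P assume "(0::real, 0::real) \<in> P" "(0::real, 1::real) \<in> P" "origami_closed P"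
    note hh = this
    then obtain LL where op: "origami_pair P LL" unfolding origami_closed_def by blast
    have "(x, y) \<in> P" using h hh unfolding mem_points by blast
    then show "(x, 0) \<in> P" by (rule proj_in[OF op hh(1) hh(2)])
  qed
  have y0: "(y, 0) \<in> origami_points" unfolding mem_points
  proof (intro allI impI, elim conjE)
    fix P assume "(0::real, 0::real) \<in> P" "(0::real, 1::real) \<in> P" "origami_closed P"
    note hh = this
    then obtain LL where op: "origami_pair P LL" unfolding origami_closed_def by blast
    have "(x, y) \<in> P" using h hh unfolding mem_points by blast
    then have "(y, x) \<in> P" by (rule swap_in[OF op hh(1) hh(2)])
    then show "(y, 0) \<in> P" by (rule proj_in[OF op hh(1) hh(2)])
  qed
  have "\<bar>x\<bar> = dist (0::real, 0::real) (x, 0)" by (simp add: dist_pt)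
  moreover have "\<bar>y\<bar> = dist (0::real, 0::real) (y, 0)" by (simp add: dist_pt)
  ultimately show "x \<in> origami_numbers \<and> y \<in> origami_numbers"
    unfolding origami_numbers_def using O0 x0 y0 by blast
next
  assume "x \<in> origami_numbers \<and> y \<in> origami_numbers"
  then obtain a1 a2 b1 b2 where a: "a1 \<in> origami_points" "a2 \<in> origami_points" "\<bar>x\<bar> = dist a1 a2"
    and b: "b1 \<in> origami_points" "b2 \<in> origami_points" "\<bar>y\<bar> = dist b1 b2"
    unfolding origami_numbers_def by blast
  show "(x, y) \<in> origami_points" unfolding mem_points
  proof (intro allI impI, elim conjE)
    fix P assume h: "(0::real, 0::real) \<in> P" "(0::real, 1::real) \<in> P" "origami_closed P"
    then obtain LL where op: "origami_pair P LL" unfolding origami_closed_def by blast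
    have m: "a1 \<in> P" "a2 \<in> P" "b1 \<in> P" "b2 \<in> P" using a b h unfolding mem_points by blast+
    have "(x, 0) \<in> P" by (rule coord_in[OF op h(1) h(2) m(1) m(2) a(3)])
    moreover have "(y, 0) \<in> P" by (rule coord_in[OF op h(1) h(2) m(3) m(4) b(3)])
    ultimately show "(x, y) \<in> P" by (rule pair_in[OF op h(1) h(2)])
  qed
qed

end
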